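(* Let $U:\mathbb{R}\to\mathbb{R}$ be smooth and skew periodic, $U(x)=\tilde U(x)-\bar b x$ with $\tilde U$ smooth $1$-periodic, and assume the critical points of $U$ in one period are exactly $k\ge1$ local minima $x_1,\dots,x_k$ interleaved with $k$ local maxima $x_{1/2},\dots,x_{k+1/2}$, $0=x_{1/2}<x_1<x_{3/2}<\dots<x_k<x_{k+1/2}=1$, with $x_{i+\ell k}=x_i+\ell$ for $\ell\in\mathbb{Z}$. Define $$W_i:=\min_{j=1,\dots,k}\big(\tilde h_R(x_i;x_{j+1})+\tilde h_L(x_i;x_j)\big),\qquad i=1,\dots,k.$$ Then $(W_1,\dots,W_k)$ solves the discrete weak KAM problem $$W_i=\min_{j=1,\dots,k}\{W_j+h(x_i;x_j)\}\qquad\text{for all } i=1,\dots,k,$$ where $h$ is the Peierls barrier.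
   Context: Let $L(s,x)=\frac14(s+U'(x))^2$ (with $U'$ $1$-periodic). Peierls barrier on $\mathbb{S}^1=\mathbb{R}/\mathbb{Z}$: $h(y;x)=\liminf_{T\to\infty}\inf\{\int_0^TL(\dot\gamma,\gamma)dt:\gamma:[0,T]\to\mathbb{S}^1\text{ absolutely continuous},\gamma(0)=x,\gamma(T)=y\}$. Right barrier: for $y\in[x_i,x_{i+k}]\subset\mathbb{R}$, $h_R(y;x_i)=\inf\{\int_0^TL(\dot\gamma,\gamma)dt: T\ge0,\ \gamma:[0,T]\to\mathbb{R}\text{ absolutely continuous},\gamma(0)=x_i,\gamma(T)=y\}$; left barrier: for $y\in[x_{i-k},x_i]$, $h_L(y;x_i)$ is defined by the same formula. (Explicitly, $h_R(y;x_i)$ is the sum over the wells crossed of the uphill increments $U(x_{j+1/2})-U(x_j)$, with $\max_{z\in[x_m,y]}U(z)-U(x_m)$ for the last partial well $[x_m,y]$; analogously for $h_L$.) For $i,j\in\{1,\dots,k\}$ (indices of $x_{j+1}$ understood with $x_{k+1}=x_1+1$): $\tilde h_R(x_i;x_{j+1})=h_R(x_i;x_{j+1})$ if $j<i$ and $=h_R(x_{i+k};x_{j+1})$ if $j\ge i$; $\tilde h_L(x_i;x_j)=h_L(x_i;x_j)$ if $j\ge i$ and $=h_L(x_{i-k};x_j)$ if $j<i$. These are the costs of the counterclockwise path from $x_{j+1}$ to $x_i$ and the clockwise path from $x_j$ to $x_i$. *)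

theory Defs
  imports "HOL-Analysis.Analysis"
begin

definition smooth_real :: "(real \<Rightarrow> real) \<Rightarrow> bool" where
  "smooth_real f \<longleftrightarrow> (\<forall>n x. ((deriv ^^ n) f) differentiable (at x))"

definition abs_cont_on :: "real set \<Rightarrow> (real \<Rightarrow> real) \<Rightarrow> bool" where
  "abs_cont_on S f \<longleftrightarrow>
     (\<forall>\<epsilon>>0. \<exists>\<delta>>0. \<forall>(n::nat) (a::nat \<Rightarrow> real) b.
        (\<forall>i<n. a i \<le> b i \<and> {a i..b i} \<subseteq> S) \<longrightarrow>
        (\<forall>i<n. \<forall>j<n. i \<noteq> j \<longrightarrow> {a i<..<b i} \<inter> {a j<..<b j} = {}) \<longrightarrow>
        (\<Sum>i<n. b i - a i) < \<delta> \<longrightarrow> (\<Sum>i<n. \<bar>f (b i) - f (a i)\<bar>) < \<epsilon>)"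

definition lagr :: "(real \<Rightarrow> real) \<Rightarrow> real \<Rightarrow> real \<Rightarrow> real" where
  "lagr U s x = (s + deriv U x)\<^sup>2 / 4"

(* action of gamma on [0,T]; the derivative of an AC curve exists a.e. *)
definition action :: "(real \<Rightarrow> real) \<Rightarrow> real \<Rightarrow> (real \<Rightarrow> real) \<Rightarrow> real" where
  "action U T \<gamma> = integral {0..T} (\<lambda>t. lagr U (deriv \<gamma> t) (\<gamma> t))"

(* admissible curves: absolutely continuous on [0,T] with finite action
   (curves with non-integrable, i.e. infinite, action do not affect the infimum) *)
definition admissible :: "(real \<Rightarrow> real) \<Rightarrow> real \<Rightarrow> (real \<Rightarrow> real) \<Rightarrow> bool" where
  "admissible U T \<gamma> \<longleftrightarrow> 0 \<le> T \<and> abs_cont_on {0..T} \<gamma> \<and>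
     (\<lambda>t. lagr U (deriv \<gamma> t) (\<gamma> t)) integrable_on {0..T}"

(* h_R(y;x) = h_L(y;x) on R: infimum of the action over all T >= 0 and curves from x to y *)
definition barrier :: "(real \<Rightarrow> real) \<Rightarrow> real \<Rightarrow> real \<Rightarrow> real" where
  "barrier U x y = Inf {action U T \<gamma> | T \<gamma>. admissible U T \<gamma> \<and> \<gamma> 0 = x \<and> \<gamma> T = y}"

(* Peierls barrier h(y;x) on S^1 = R/Z, via lifts to R: a curve on S^1 from [x] to [y]
   lifts to a curve on R from x to y + m for some integer m (L is 1-periodic in x) *)
definition peierls :: "(real \<Rightarrow> real) \<Rightarrow> real \<Rightarrow> real \<Rightarrow> ereal" where
  "peierls U x y = Liminf at_top (\<lambda>T. ereal (Inf {action U T \<gamma> | \<gamma>.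
       admissible U T \<gamma> \<and> \<gamma> 0 = x \<and> (\<exists>m::int. \<gamma> T = y + of_int m)}))"

definition tilde_hR :: "(real \<Rightarrow> real) \<Rightarrow> (int \<Rightarrow> real) \<Rightarrow> int \<Rightarrow> int \<Rightarrow> int \<Rightarrow> real" where
  "tilde_hR U xm k i j = (if j < i then barrier U (xm (j + 1)) (xm i)
                          else barrier U (xm (j + 1)) (xm (i + k)))"

definition tilde_hL :: "(real \<Rightarrow> real) \<Rightarrow> (int \<Rightarrow> real) \<Rightarrow> int \<Rightarrow> int \<Rightarrow> int \<Rightarrow> real" where
  "tilde_hL U xm k i j = (if i \<le> j then barrier U (xm j) (xm i)
                          else barrier U (xm j) (xm (i - k)))"

definition Wval :: "(real \<Rightarrow> real) \<Rightarrow> (int \<Rightarrow> real) \<Rightarrow> int \<Rightarrow> int \<Rightarrow> real" where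
  "Wval U xm k i = Min ((\<lambda>j. tilde_hR U xm k i j + tilde_hL U xm k i j) ` {1..k})"

end

theory Submission
  imports Defs
begin

lemma acD:
  assumes "abs_cont_on S f" "e > 0"
  obtains d where "d > 0" "\<And>(n::nat) a b. (\<forall>i<n. a i \<le> b i \<and> {a i..b i} \<subseteq> S) \<Longrightarrow>
        (\<forall>i<n. \<forall>j<n. i \<noteq> j \<longrightarrow> {a i<..<b i} \<inter> {a j<..<b j} = {}) \<Longrightarrow>
        (\<Sum>i<n. b i - a i) < d \<Longrightarrow> (\<Sum>i<n. \<bar>f (b i) - f (a i)\<bar>) < e"
proof -
  from assms have "\<exists>d>0. \<forall>(n::nat) a b. (\<forall>i<n. a i \<le> b i \<and> {a i..b i} \<subseteq> S) \<longrightarrow>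
        (\<forall>i<n. \<forall>j<n. i \<noteq> j \<longrightarrow> {a i<..<b i} \<inter> {a j<..<b j} = {}) \<longrightarrow>
        (\<Sum>i<n. b i - a i) < d \<longrightarrow> (\<Sum>i<n. \<bar>f (b i) - f (a i)\<bar>) < e"
    unfolding abs_cont_on_def by blast
  then obtain d where "d > 0" and H: "\<forall>(n::nat) a b. (\<forall>i<n. a i \<le> b i \<and> {a i..b i} \<subseteq> S) \<longrightarrow>
        (\<forall>i<n. \<forall>j<n. i \<noteq> j \<longrightarrow> {a i<..<b i} \<inter> {a j<..<b j} = {}) \<longrightarrow>
        (\<Sum>i<n. b i - a i) < d \<longrightarrow> (\<Sum>i<n. \<bar>f (b i) - f (a i)\<bar>) < e" by blast
  show ?thesis
    by (rule that[OF \<open>d > 0\<close>]) (use H in blast)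
qed

lemma acI:
  assumes "\<And>e. e > 0 \<Longrightarrow> \<exists>d>0. \<forall>(n::nat) a b. (\<forall>i<n. a i \<le> b i \<and> {a i..b i} \<subseteq> S) \<longrightarrow>
        (\<forall>i<n. \<forall>j<n. i \<noteq> j \<longrightarrow> {a i<..<b i} \<inter> {a j<..<b j} = {}) \<longrightarrow>
        (\<Sum>i<n. b i - a i) < d \<longrightarrow> (\<Sum>i<n. \<bar>f (b i) - f (a i)\<bar>) < e"
  shows "abs_cont_on S f"
  unfolding abs_cont_on_def using assms by blast

lemma ac_subset: assumes "abs_cont_on S f" "S' \<subseteq> S" shows "abs_cont_on S' f"
proof (rule acI)
  fix e :: real assume "e > 0"
  obtain d where d: "d > 0" and H: "\<And>(n::nat) a b. (\<forall>i<n. a i \<le> b i \<and> {a i..b i} \<subseteq> S) \<Longrightarrow>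
        (\<forall>i<n. \<forall>j<n. i \<noteq> j \<longrightarrow> {a i<..<b i} \<inter> {a j<..<b j} = {}) \<Longrightarrow>
        (\<Sum>i<n. b i - a i) < d \<Longrightarrow> (\<Sum>i<n. \<bar>f (b i) - f (a i)\<bar>) < e"
    using acD[OF assms(1) \<open>e > 0\<close>] by blast
  show "\<exists>d>0. \<forall>(n::nat) a b. (\<forall>i<n. a i \<le> b i \<and> {a i..b i} \<subseteq> S') \<longrightarrow>
        (\<forall>i<n. \<forall>j<n. i \<noteq> j \<longrightarrow> {a i<..<b i} \<inter> {a j<..<b j} = {}) \<longrightarrow>
        (\<Sum>i<n. b i - a i) < d \<longrightarrow> (\<Sum>i<n. \<bar>f (b i) - f (a i)\<bar>) < e"
  proof (intro exI[of _ d] conjI allI impI d)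
    fix n :: nat and a b :: "nat \<Rightarrow> real"
    assume h1: "\<forall>i<n. a i \<le> b i \<and> {a i..b i} \<subseteq> S'"
      and h2: "\<forall>i<n. \<forall>j<n. i \<noteq> j \<longrightarrow> {a i<..<b i} \<inter> {a j<..<b j} = {}"
      and h3: "(\<Sum>i<n. b i - a i) < d"
    show "(\<Sum>i<n. \<bar>f (b i) - f (a i)\<bar>) < e"
      by (rule H[OF _ h2 h3]) (use h1 assms(2) in blast)
  qed
qed

lemma ac_addc: "abs_cont_on S f \<Longrightarrow> abs_cont_on S (\<lambda>t. f t + c)"
  unfolding abs_cont_on_def by simp

lemma ac_shift:
  assumes ac: "abs_cont_on S f" and sub: "\<forall>x\<in>S'. x + c \<in> S"
  shows "abs_cont_on S' (\<lambda>t. f (t + c))"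
proof (rule acI)
  fix e :: real assume "e > 0"
  obtain d where d: "d > 0" and H: "\<And>(n::nat) a b. (\<forall>i<n. a i \<le> b i \<and> {a i..b i} \<subseteq> S) \<Longrightarrow>
        (\<forall>i<n. \<forall>j<n. i \<noteq> j \<longrightarrow> {a i<..<b i} \<inter> {a j<..<b j} = {}) \<Longrightarrow>
        (\<Sum>i<n. b i - a i) < d \<Longrightarrow> (\<Sum>i<n. \<bar>f (b i) - f (a i)\<bar>) < e"
    using acD[OF ac \<open>e > 0\<close>] by blast
  show "\<exists>d>0. \<forall>(n::nat) a b. (\<forall>i<n. a i \<le> b i \<and> {a i..b i} \<subseteq> S') \<longrightarrow>
        (\<forall>i<n. \<forall>j<n. i \<noteq> j \<longrightarrow> {a i<..<b i} \<inter> {a j<..<b j} = {}) \<longrightarrow>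
        (\<Sum>i<n. b i - a i) < d \<longrightarrow> (\<Sum>i<n. \<bar>f (b i + c) - f (a i + c)\<bar>) < e"
  proof (intro exI[of _ d] conjI allI impI d)
    fix n :: nat and a b :: "nat \<Rightarrow> real"
    assume h1: "\<forall>i<n. a i \<le> b i \<and> {a i..b i} \<subseteq> S'"
      and h2: "\<forall>i<n. \<forall>j<n. i \<noteq> j \<longrightarrow> {a i<..<b i} \<inter> {a j<..<b j} = {}"
      and h3: "(\<Sum>i<n. b i - a i) < d"
    have "(\<Sum>i<n. \<bar>f ((\<lambda>i. b i + c) i) - f ((\<lambda>i. a i + c) i)\<bar>) < e"
    proof (rule H[where a="\<lambda>i. a i + c" and b="\<lambda>i. b i + c"])
      show "\<forall>i<n. a i + c \<le> b i + c \<and> {a i + c..b i + c} \<subseteq> S"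
      proof (intro allI impI conjI subsetI)
        fix i y assume i: "i < n" and y: "y \<in> {a i + c..b i + c}"
        have "y - c \<in> {a i..b i}" using y by simp
        moreover have "{a i..b i} \<subseteq> S'" using h1 i by blast
        ultimately have "y - c \<in> S'" by blast
        then have "(y - c) + c \<in> S" using sub by blast
        then show "y \<in> S" by simp
      next
        fix i assume "i < n" then show "a i + c \<le> b i + c" using h1 by simp
      qed
      show "\<forall>i<n. \<forall>j<n. i \<noteq> j \<longrightarrow> {a i + c<..<b i + c} \<inter> {a j + c<..<b j + c} = {}"
      proof (intro allI impI)
        fix i j assume "i < n" "j < n" "i \<noteq> j"
        then have D: "{a i<..<b i} \<inter> {a j<..<b j} = {}" using h2 by auto
        show "{a i + c<..<b i + c} \<inter> {a j + c<..<b j + c} = {}"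
        proof (rule ccontr)
          assume "{a i + c<..<b i + c} \<inter> {a j + c<..<b j + c} \<noteq> {}"
          then obtain y where "y \<in> {a i + c<..<b i + c}" "y \<in> {a j + c<..<b j + c}" by blast
          then have "y - c \<in> {a i<..<b i} \<inter> {a j<..<b j}" by auto
          with D show False by blast
        qed
      qed
      show "(\<Sum>i<n. (b i + c) - (a i + c)) < d" using h3 by simp
    qed
    then show "(\<Sum>i<n. \<bar>f (b i + c) - f (a i + c)\<bar>) < e" by simp
  qed
qed

lemma ac_linear: "abs_cont_on S (\<lambda>t. p + t * s)"
proof (rule acI)
  fix e :: real assume e: "e > 0"
  show "\<exists>d>0. \<forall>(n::nat) a b. (\<forall>i<n. a i \<le> b i \<and> {a i..b i} \<subseteq> S) \<longrightarrow>
        (\<forall>i<n. \<forall>j<n. i \<noteq> j \<longrightarrow> {a i<..<b i} \<inter> {a j<..<b j} = {}) \<longrightarrow>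
        (\<Sum>i<n. b i - a i) < d \<longrightarrow> (\<Sum>i<n. \<bar>(p + b i * s) - (p + a i * s)\<bar>) < e"
  proof (intro exI[of _ "e / (\<bar>s\<bar> + 1)"] conjI allI impI)
    show "e / (\<bar>s\<bar> + 1) > 0" using e by simp
    fix n :: nat and a b :: "nat \<Rightarrow> real"
    assume h1: "\<forall>i<n. a i \<le> b i \<and> {a i..b i} \<subseteq> S"
      and h3: "(\<Sum>i<n. b i - a i) < e / (\<bar>s\<bar> + 1)"
    have "(\<Sum>i<n. \<bar>(p + b i * s) - (p + a i * s)\<bar>) = (\<Sum>i<n. (b i - a i) * \<bar>s\<bar>)"
      using h1 by (intro sum.cong) (auto simp: abs_mult left_diff_distrib[symmetric])
    also have "\<dots> = (\<Sum>i<n. b i - a i) * \<bar>s\<bar>" by (simp add: sum_distrib_right)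
    also have "\<dots> \<le> (\<Sum>i<n. b i - a i) * (\<bar>s\<bar> + 1)"
      using h1 by (intro mult_left_mono sum_nonneg) auto
    also have "\<dots> < e"
      using h3 by (simp add: pos_less_divide_eq add_pos_nonneg)
    finally show "(\<Sum>i<n. \<bar>(p + b i * s) - (p + a i * s)\<bar>) < e" .
  qed
qed

lemma ac_cont:
  assumes ac: "abs_cont_on {a..b} f"
  shows "continuous_on {a..b} f"
  unfolding continuous_on_iff
proof (intro ballI allI impI)
  fix x e assume x: "x \<in> {a..b}" and e: "(e::real) > 0"
  obtain d where d: "d > 0" and H: "\<And>(n::nat) aa bb. (\<forall>i<n. aa i \<le> bb i \<and> {aa i..bb i} \<subseteq> {a..b}) \<Longrightarrow>
        (\<forall>i<n. \<forall>j<n. i \<noteq> j \<longrightarrow> {aa i<..<bb i} \<inter> {aa j<..<bb j} = {}) \<Longrightarrow>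
        (\<Sum>i<n. bb i - aa i) < d \<Longrightarrow> (\<Sum>i<n. \<bar>f (bb i) - f (aa i)\<bar>) < e"
    using acD[OF ac e] by blast
  show "\<exists>d>0. \<forall>x'\<in>{a..b}. dist x' x < d \<longrightarrow> dist (f x') (f x) < e"
  proof (intro exI[of _ d] conjI ballI impI d)
    fix y assume y: "y \<in> {a..b}" and dy: "dist y x < d"
    have "(\<Sum>i<(1::nat). \<bar>f ((\<lambda>_. max x y) i) - f ((\<lambda>_. min x y) i)\<bar>) < e"
      by (rule H) (use x y dy in \<open>auto simp: dist_real_def\<close>)
    then show "dist (f y) (f x) < e"
      by (cases "x \<le> y") (simp_all add: dist_real_def max_def min_def abs_minus_commute)
  qed
qed


lemma ac_concat:
  assumes ac1: "abs_cont_on {0..T1} g1" and ac2: "abs_cont_on {0..T2} g2"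
    and eq: "g1 T1 = g2 0" and T1: "0 \<le> T1" and T2: "0 \<le> T2"
  shows "abs_cont_on {0..T1+T2} (\<lambda>t. if t \<le> T1 then g1 t else g2 (t - T1))"
    (is "abs_cont_on _ ?g")
proof (rule acI)
  fix e :: real assume e: "e > 0"
  then have e2: "e/2 > 0" by simp
  obtain d1 where d1: "d1 > 0" and H1: "\<And>(n::nat) a b. (\<forall>i<n. a i \<le> b i \<and> {a i..b i} \<subseteq> {0..T1}) \<Longrightarrow>
        (\<forall>i<n. \<forall>j<n. i \<noteq> j \<longrightarrow> {a i<..<b i} \<inter> {a j<..<b j} = {}) \<Longrightarrow>
        (\<Sum>i<n. b i - a i) < d1 \<Longrightarrow> (\<Sum>i<n. \<bar>g1 (b i) - g1 (a i)\<bar>) < e/2"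
    using acD[OF ac1 e2] by blast
  obtain d2 where d2: "d2 > 0" and H2: "\<And>(n::nat) a b. (\<forall>i<n. a i \<le> b i \<and> {a i..b i} \<subseteq> {0..T2}) \<Longrightarrow>
        (\<forall>i<n. \<forall>j<n. i \<noteq> j \<longrightarrow> {a i<..<b i} \<inter> {a j<..<b j} = {}) \<Longrightarrow>
        (\<Sum>i<n. b i - a i) < d2 \<Longrightarrow> (\<Sum>i<n. \<bar>g2 (b i) - g2 (a i)\<bar>) < e/2"
    using acD[OF ac2 e2] by blast
  show "\<exists>d>0. \<forall>(n::nat) a b. (\<forall>i<n. a i \<le> b i \<and> {a i..b i} \<subseteq> {0..T1+T2}) \<longrightarrow>
        (\<forall>i<n. \<forall>j<n. i \<noteq> j \<longrightarrow> {a i<..<b i} \<inter> {a j<..<b j} = {}) \<longrightarrow>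
        (\<Sum>i<n. b i - a i) < d \<longrightarrow> (\<Sum>i<n. \<bar>?g (b i) - ?g (a i)\<bar>) < e"
  proof (intro exI[of _ "min d1 d2"] conjI allI impI)
    show "min d1 d2 > 0" using d1 d2 by simp
    fix n :: nat and a b :: "nat \<Rightarrow> real"
    assume h1: "\<forall>i<n. a i \<le> b i \<and> {a i..b i} \<subseteq> {0..T1+T2}"
      and h2: "\<forall>i<n. \<forall>j<n. i \<noteq> j \<longrightarrow> {a i<..<b i} \<inter> {a j<..<b j} = {}"
      and h3: "(\<Sum>i<n. b i - a i) < min d1 d2"
    define a1 where "a1 i = min (a i) T1" for i
    define b1 where "b1 i = min (b i) T1" for i
    define a2 where "a2 i = max (a i) T1 - T1" for i
    define b2 where "b2 i = max (b i) T1 - T1" for i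
    have ab: "a i \<le> b i" "0 \<le> a i" "b i \<le> T1 + T2" if "i < n" for i
      using h1 that by (auto dest!: spec[of _ i])
    have split: "?g (b i) - ?g (a i) = (g1 (b1 i) - g1 (a1 i)) + (g2 (b2 i) - g2 (a2 i))" if "i < n" for i
    proof -
      have "a i \<le> b i" using ab[OF that] by simp
      then consider "b i \<le> T1" | "T1 \<le> a i" | "a i < T1" "T1 < b i" by linarith
      then show ?thesis
      proof cases
        case 1
        then have "a i \<le> T1" using \<open>a i \<le> b i\<close> by linarith
        with 1 show ?thesis unfolding a1_def b1_def a2_def b2_def by simp
      next
        case 2
        then have "T1 \<le> b i" using \<open>a i \<le> b i\<close> by linarith
        with 2 eq show ?thesis unfolding a1_def b1_def a2_def b2_def by (cases "a i = T1") simp_all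
      next
        case 3
        with eq show ?thesis unfolding a1_def b1_def a2_def b2_def by simp
      qed
    qed
    have L: "b1 i - a1 i \<le> b i - a i" "b2 i - a2 i \<le> b i - a i" if "i < n" for i
      using ab[OF that] unfolding a1_def b1_def a2_def b2_def by (simp_all add: min_def max_def)
    have s1: "(\<Sum>i<n. \<bar>g1 (b1 i) - g1 (a1 i)\<bar>) < e/2"
    proof (rule H1)
      show "\<forall>i<n. a1 i \<le> b1 i \<and> {a1 i..b1 i} \<subseteq> {0..T1}"
      proof (intro allI impI)
        fix i assume "i < n"
        then show "a1 i \<le> b1 i \<and> {a1 i..b1 i} \<subseteq> {0..T1}"
          using ab[OF \<open>i < n\<close>] T1 unfolding a1_def b1_def by (auto simp: min_def)
      qed
      show "\<forall>i<n. \<forall>j<n. i \<noteq> j \<longrightarrow> {a1 i<..<b1 i} \<inter> {a1 j<..<b1 j} = {}"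
      proof (intro allI impI)
        fix i j assume "i < n" "j < n" "i \<noteq> j"
        then have D: "{a i<..<b i} \<inter> {a j<..<b j} = {}" using h2 by auto
        have "{a1 i<..<b1 i} \<subseteq> {a i<..<b i}" "{a1 j<..<b1 j} \<subseteq> {a j<..<b j}"
          unfolding a1_def b1_def by auto
        with D show "{a1 i<..<b1 i} \<inter> {a1 j<..<b1 j} = {}" by blast
      qed
      have "(\<Sum>i<n. b1 i - a1 i) \<le> (\<Sum>i<n. b i - a i)" by (rule sum_mono) (use L in auto)
      then show "(\<Sum>i<n. b1 i - a1 i) < d1" using h3 by linarith
    qed
    have s2: "(\<Sum>i<n. \<bar>g2 (b2 i) - g2 (a2 i)\<bar>) < e/2"
    proof (rule H2)
      show "\<forall>i<n. a2 i \<le> b2 i \<and> {a2 i..b2 i} \<subseteq> {0..T2}"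
      proof (intro allI impI)
        fix i assume "i < n"
        then show "a2 i \<le> b2 i \<and> {a2 i..b2 i} \<subseteq> {0..T2}"
          using ab[OF \<open>i < n\<close>] T1 T2 unfolding a2_def b2_def by (auto simp: max_def)
      qed
      show "\<forall>i<n. \<forall>j<n. i \<noteq> j \<longrightarrow> {a2 i<..<b2 i} \<inter> {a2 j<..<b2 j} = {}"
      proof (intro allI impI)
        fix i j assume "i < n" "j < n" "i \<noteq> j"
        then have D: "{a i<..<b i} \<inter> {a j<..<b j} = {}" using h2 by auto
        show "{a2 i<..<b2 i} \<inter> {a2 j<..<b2 j} = {}"
        proof (rule ccontr)
          assume "{a2 i<..<b2 i} \<inter> {a2 j<..<b2 j} \<noteq> {}"
          then obtain y where "y \<in> {a2 i<..<b2 i}" "y \<in> {a2 j<..<b2 j}" by blast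
          then have "y + T1 \<in> {a i<..<b i} \<inter> {a j<..<b j}"
            unfolding a2_def b2_def by (simp add: max_def split: if_splits)
          with D show False by blast
        qed
      qed
      have "(\<Sum>i<n. b2 i - a2 i) \<le> (\<Sum>i<n. b i - a i)" by (rule sum_mono) (use L in auto)
      then show "(\<Sum>i<n. b2 i - a2 i) < d2" using h3 by linarith
    qed
    have "(\<Sum>i<n. \<bar>?g (b i) - ?g (a i)\<bar>) \<le> (\<Sum>i<n. \<bar>g1 (b1 i) - g1 (a1 i)\<bar> + \<bar>g2 (b2 i) - g2 (a2 i)\<bar>)"
    proof (rule sum_mono)
      fix i assume "i \<in> {..<n}"
      then have "i < n" by simp
      show "\<bar>?g (b i) - ?g (a i)\<bar> \<le> \<bar>g1 (b1 i) - g1 (a1 i)\<bar> + \<bar>g2 (b2 i) - g2 (a2 i)\<bar>"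
        by (subst split[OF \<open>i < n\<close>]) (rule abs_triangle_ineq)
    qed
    also have "\<dots> < e" using s1 s2 by (simp add: sum.distrib)
    finally show "(\<Sum>i<n. \<bar>?g (b i) - ?g (a i)\<bar>) < e" .
  qed
qed

lemma deriv_shift: "deriv f (x + c) = deriv (\<lambda>t. f (t + c)) x"
  by (simp add: deriv_def DERIV_shift)

lemma deriv_addc: "deriv (\<lambda>t. f t + c) x = deriv f (x::real)"
  by (simp add: deriv_def has_real_derivative_iff_has_vector_derivative has_vector_derivative_add_const)

lemma has_integral_shift:
  fixes f :: "real \<Rightarrow> real"
  assumes "(f has_integral i) {a..b}"
  shows "((\<lambda>x. f (x + c)) has_integral i) {a - c..b - c}"
proof -
  have "((\<lambda>x. f (1 *\<^sub>R x + c)) has_integral (i /\<^sub>R 1 ^ DIM(real)))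
           (cbox ((a - c) /\<^sub>R 1) ((b - c) /\<^sub>R 1))"
    using assms by (intro has_integral_affinity') auto
  then show ?thesis by simp
qed

lemma lagr_nonneg: "0 \<le> lagr U s x"
  by (simp add: lagr_def)

lemma action_nonneg: "admissible U T \<gamma> \<Longrightarrow> 0 \<le> action U T \<gamma>"
  unfolding action_def admissible_def by (auto intro!: integral_nonneg lagr_nonneg)

lemma linear_adm:
  assumes DC: "continuous_on UNIV (deriv U)" and T: "0 \<le> T"
  shows "admissible U T (\<lambda>t. p + t * s)"
    "action U T (\<lambda>t. p + t * s) = integral {0..T} (\<lambda>t. lagr U s (p + t * s))"
proof -
  have d: "deriv (\<lambda>t. p + t * s) t = s" for t
    by (rule DERIV_imp_deriv) (auto intro!: derivative_eq_intros)
  have "continuous_on {0..T} (\<lambda>t. lagr U s (p + t * s))"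
    unfolding lagr_def
    by (intro continuous_intros continuous_on_compose2[OF DC]) auto
  then show "admissible U T (\<lambda>t. p + t * s)"
    unfolding admissible_def d using T ac_linear by (auto intro: integrable_continuous_real)
  show "action U T (\<lambda>t. p + t * s) = integral {0..T} (\<lambda>t. lagr U s (p + t * s))"
    unfolding action_def d ..
qed

lemma barrier_set_ne:
  assumes DC: "continuous_on UNIV (deriv U)"
  shows "{action U T \<gamma> | T \<gamma>. admissible U T \<gamma> \<and> \<gamma> 0 = x \<and> \<gamma> T = y} \<noteq> {}"
proof -
  have "admissible U 1 (\<lambda>t. x + t * (y - x))" using linear_adm[OF DC] by simp
  then have "action U 1 (\<lambda>t. x + t * (y - x)) \<in> {action U T \<gamma> | T \<gamma>. admissible U T \<gamma> \<and> \<gamma> 0 = x \<and> \<gamma> T = y}"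
    by (intro CollectI exI[of _ 1] exI[of _ "\<lambda>t. x + t * (y - x)"]) simp
  then show ?thesis by blast
qed

lemma barrier_le:
  assumes "admissible U T \<gamma>" "\<gamma> 0 = x" "\<gamma> T = y"
  shows "barrier U x y \<le> action U T \<gamma>"
  unfolding barrier_def
proof (rule cInf_lower)
  show "action U T \<gamma> \<in> {action U T \<gamma> | T \<gamma>. admissible U T \<gamma> \<and> \<gamma> 0 = x \<and> \<gamma> T = y}"
    using assms by blast
  show "bdd_below {action U T \<gamma> | T \<gamma>. admissible U T \<gamma> \<and> \<gamma> 0 = x \<and> \<gamma> T = y}"
    by (rule bdd_belowI[of _ 0]) (auto intro: action_nonneg)
qed

lemma barrier_ge:
  assumes DC: "continuous_on UNIV (deriv U)"
    and H: "\<And>T \<gamma>. admissible U T \<gamma> \<Longrightarrow> \<gamma> 0 = x \<Longrightarrow> \<gamma> T = y \<Longrightarrow> c \<le> action U T \<gamma>"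
  shows "c \<le> barrier U x y"
  unfolding barrier_def
  by (rule cInf_greatest[OF barrier_set_ne[OF DC]]) (use H in blast)

lemma barrier_nonneg:
  assumes DC: "continuous_on UNIV (deriv U)"
  shows "0 \<le> barrier U x y"
  by (rule barrier_ge[OF DC]) (rule action_nonneg)

lemma barrier_approx:
  assumes DC: "continuous_on UNIV (deriv U)" and e: "e > 0"
  shows "\<exists>T \<gamma>. admissible U T \<gamma> \<and> \<gamma> 0 = x \<and> \<gamma> T = y \<and> action U T \<gamma> < barrier U x y + e"
proof -
  have "Inf {action U T \<gamma> | T \<gamma>. admissible U T \<gamma> \<and> \<gamma> 0 = x \<and> \<gamma> T = y} < barrier U x y + e"
    using e unfolding barrier_def by simp
  from cInf_lessD[OF barrier_set_ne[OF DC] this] show ?thesis by blast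
qed

lemma adm_split:
  assumes adm: "admissible U T \<gamma>" and t0: "0 \<le> t0" "t0 \<le> T"
  shows "admissible U t0 \<gamma>" "admissible U (T - t0) (\<lambda>t. \<gamma> (t + t0))"
    "action U T \<gamma> = action U t0 \<gamma> + action U (T - t0) (\<lambda>t. \<gamma> (t + t0))"
proof -
  define g where "g t = lagr U (deriv \<gamma> t) (\<gamma> t)" for t
  have ac: "abs_cont_on {0..T} \<gamma>" and int: "g integrable_on {0..T}"
    using adm unfolding admissible_def g_def by auto
  show "admissible U t0 \<gamma>"
    unfolding admissible_def using t0 ac int
    by (auto intro: ac_subset integrable_subinterval_real simp: g_def[symmetric])
  have int2: "(g has_integral integral {t0..T} g) {t0..T}"
    using integrable_subinterval_real[OF int, of t0 T] t0 by (simp add: integrable_integral)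
  have eqg: "lagr U (deriv (\<lambda>t. \<gamma> (t + t0)) t) (\<gamma> (t + t0)) = g (t + t0)" for t
    unfolding g_def deriv_shift ..
  have int3: "((\<lambda>t. g (t + t0)) has_integral integral {t0..T} g) {0..T - t0}"
    using has_integral_shift[OF int2, of t0] by simp
  show "admissible U (T - t0) (\<lambda>t. \<gamma> (t + t0))"
    unfolding admissible_def eqg using t0 int3
    by (auto intro!: ac_shift[OF ac])
  have "action U T \<gamma> = integral {0..t0} g + integral {t0..T} g"
    unfolding action_def g_def[symmetric] using Henstock_Kurzweil_Integration.integral_combine[OF t0 int] by simp
  also have "integral {t0..T} g = action U (T - t0) (\<lambda>t. \<gamma> (t + t0))"
    unfolding action_def eqg using int3 by (simp add: integral_unique)
  finally show "action U T \<gamma> = action U t0 \<gamma> + action U (T - t0) (\<lambda>t. \<gamma> (t + t0))"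
    unfolding action_def g_def by simp
qed

lemma adm_concat:
  assumes a1: "admissible U T1 g1" and a2: "admissible U T2 g2" and eq: "g1 T1 = g2 0"
  defines "\<gamma> \<equiv> (\<lambda>t. if t \<le> T1 then g1 t else g2 (t - T1))"
  shows "admissible U (T1 + T2) \<gamma>" "action U (T1 + T2) \<gamma> = action U T1 g1 + action U T2 g2"
proof -
  have T1: "0 \<le> T1" and T2: "0 \<le> T2" and ac1: "abs_cont_on {0..T1} g1" and ac2: "abs_cont_on {0..T2} g2"
    and i1: "(\<lambda>t. lagr U (deriv g1 t) (g1 t)) integrable_on {0..T1}"
    and i2: "(\<lambda>t. lagr U (deriv g2 t) (g2 t)) integrable_on {0..T2}"
    using a1 a2 unfolding admissible_def by auto
  have ac: "abs_cont_on {0..T1+T2} \<gamma>"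
    unfolding \<gamma>_def by (rule ac_concat[OF ac1 ac2 eq T1 T2])
  define f where "f t = lagr U (deriv \<gamma> t) (\<gamma> t)" for t
  have h1: "(f has_integral action U T1 g1) {0..T1}"
  proof (rule has_integral_spike_finite[of "{T1}"])
    show "((\<lambda>t. lagr U (deriv g1 t) (g1 t)) has_integral action U T1 g1) {0..T1}"
      unfolding action_def using i1 by (simp add: integrable_integral)
    fix t assume t: "t \<in> {0..T1} - {T1}"
    then have "t < T1" by auto
    have "eventually (\<lambda>s. s < T1) (nhds t)"
      using \<open>t < T1\<close> by (rule eventually_nhds_in_open[of "{..<T1}", simplified])
    then have "eventually (\<lambda>s. \<gamma> s = g1 s) (nhds t)"
      by eventually_elim (simp add: \<gamma>_def)
    then have "deriv \<gamma> t = deriv g1 t" by (rule deriv_cong_ev) simp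
    moreover have "\<gamma> t = g1 t" using \<open>t < T1\<close> by (simp add: \<gamma>_def)
    ultimately show "f t = lagr U (deriv g1 t) (g1 t)" by (simp add: f_def)
  qed simp
  have h2: "(f has_integral action U T2 g2) {T1..T1+T2}"
  proof (rule has_integral_spike_finite[of "{T1}"])
    have "((\<lambda>t. lagr U (deriv g2 t) (g2 t)) has_integral action U T2 g2) {0..T2}"
      unfolding action_def using i2 by (simp add: integrable_integral)
    from has_integral_shift[OF this, of "-T1"]
    show "((\<lambda>t. lagr U (deriv g2 (t + - T1)) (g2 (t + - T1))) has_integral action U T2 g2) {T1..T1+T2}"
      by (simp add: add.commute)
    fix t assume t: "t \<in> {T1..T1+T2} - {T1}"
    then have "T1 < t" by auto
    have "eventually (\<lambda>s. T1 < s) (nhds t)"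
      using \<open>T1 < t\<close> by (rule eventually_nhds_in_open[of "{T1<..}", simplified])
    then have "eventually (\<lambda>s. \<gamma> s = g2 (s + - T1)) (nhds t)"
      by eventually_elim (simp add: \<gamma>_def)
    then have "deriv \<gamma> t = deriv (\<lambda>s. g2 (s + - T1)) t" by (rule deriv_cong_ev) simp
    also have "\<dots> = deriv g2 (t + - T1)" by (rule deriv_shift[symmetric])
    finally have "deriv \<gamma> t = deriv g2 (t + - T1)" .
    moreover have "\<gamma> t = g2 (t + - T1)" using \<open>T1 < t\<close> by (simp add: \<gamma>_def)
    ultimately show "f t = lagr U (deriv g2 (t + - T1)) (g2 (t + - T1))" by (simp add: f_def)
  qed simp
  have h: "(f has_integral (action U T1 g1 + action U T2 g2)) {0..T1+T2}"
    by (rule has_integral_combine[OF T1 _ h1 h2]) (use T2 in simp)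
  show "admissible U (T1 + T2) \<gamma>"
    unfolding admissible_def f_def[symmetric] using T1 T2 ac h by (auto simp: integrable_on_def)
  show "action U (T1 + T2) \<gamma> = action U T1 g1 + action U T2 g2"
    using integral_unique[OF h] unfolding f_def action_def by simp
qed

lemma barrier_concat:
  assumes DC: "continuous_on UNIV (deriv U)"
  shows "barrier U x z \<le> barrier U x y + barrier U y z"
proof (rule field_le_epsilon)
  fix e :: real assume e: "e > 0"
  then have e2: "e/2 > 0" by simp
  obtain T1 g1 where g1: "admissible U T1 g1" "g1 0 = x" "g1 T1 = y" "action U T1 g1 < barrier U x y + e/2"
    using barrier_approx[OF DC e2] by blast
  obtain T2 g2 where g2: "admissible U T2 g2" "g2 0 = y" "g2 T2 = z" "action U T2 g2 < barrier U y z + e/2"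
    using barrier_approx[OF DC e2] by blast
  have T1: "0 \<le> T1" using g1 unfolding admissible_def by simp
  have T2: "0 \<le> T2" using g2 unfolding admissible_def by simp
  have eq: "g1 T1 = g2 0" using g1 g2 by simp
  note c = adm_concat[OF g1(1) g2(1) eq]
  have "barrier U x z \<le> action U (T1 + T2) (\<lambda>t. if t \<le> T1 then g1 t else g2 (t - T1))"
  proof (rule barrier_le[OF c(1)])
    show "(if 0 \<le> T1 then g1 0 else g2 (0 - T1)) = x" using T1 g1 by simp
    show "(if T1 + T2 \<le> T1 then g1 (T1 + T2) else g2 (T1 + T2 - T1)) = z"
      using g1 g2 T2 by (cases "T2 = 0") auto
  qed
  also have "\<dots> = action U T1 g1 + action U T2 g2" by (rule c(2))
  finally show "barrier U x z \<le> barrier U x y + barrier U y z + e" using g1 g2 by simp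
qed

lemma barrier_split:
  assumes DC: "continuous_on UNIV (deriv U)"
    and btw: "(x \<le> y \<and> y \<le> z) \<or> (z \<le> y \<and> y \<le> x)"
  shows "barrier U x y + barrier U y z \<le> barrier U x z"
proof (rule barrier_ge[OF DC])
  fix T \<gamma> assume adm: "admissible U T \<gamma>" and g0: "\<gamma> 0 = x" and gT: "\<gamma> T = z"
  have T: "0 \<le> T" and ac: "abs_cont_on {0..T} \<gamma>" using adm unfolding admissible_def by auto
  have cont: "continuous_on {0..T} \<gamma>" by (rule ac_cont[OF ac])
  obtain t0 where t0: "0 \<le> t0" "t0 \<le> T" "\<gamma> t0 = y"
    using btw
  proof
    assume "x \<le> y \<and> y \<le> z"
    then show ?thesis using IVT'[of \<gamma> 0 y T, OF _ _ T cont] g0 gT that by auto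
  next
    assume "z \<le> y \<and> y \<le> x"
    then show ?thesis using IVT2'[of \<gamma> T y 0, OF _ _ T cont] g0 gT that by auto
  qed
  note s = adm_split[OF adm t0(1,2)]
  have "barrier U x y \<le> action U t0 \<gamma>" by (rule barrier_le[OF s(1) g0 t0(3)])
  moreover have "barrier U y z \<le> action U (T - t0) (\<lambda>t. \<gamma> (t + t0))"
    by (rule barrier_le[OF s(2)]) (use t0 gT in simp_all)
  ultimately show "barrier U x y + barrier U y z \<le> action U T \<gamma>" using s(3) by simp
qed

lemma barrier_transl:
  assumes P: "\<forall>x. deriv U (x + c) = deriv U x"
  shows "barrier U (x + c) (y + c) = barrier U x y"
proof -
  have key: "action U T (\<lambda>t. \<gamma> t + d) = action U T \<gamma> \<and> admissible U T (\<lambda>t. \<gamma> t + d) = admissible U T \<gamma>"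
    if "\<forall>x. deriv U (x + d) = deriv U x" for T \<gamma> d
  proof -
    have "lagr U (deriv (\<lambda>t. \<gamma> t + d) t) (\<gamma> t + d) = lagr U (deriv \<gamma> t) (\<gamma> t)" for t
      using that by (simp add: deriv_addc lagr_def)
    moreover have "abs_cont_on {0..T} (\<lambda>t. \<gamma> t + d) = abs_cont_on {0..T} \<gamma>"
    proof
      assume "abs_cont_on {0..T} (\<lambda>t. \<gamma> t + d)"
      from ac_addc[OF this, of "-d"] show "abs_cont_on {0..T} \<gamma>" by simp
    next
      assume "abs_cont_on {0..T} \<gamma>"
      from ac_addc[OF this] show "abs_cont_on {0..T} (\<lambda>t. \<gamma> t + d)" .
    qed
    ultimately show ?thesis unfolding action_def admissible_def by simp
  qed
  have Pm: "\<forall>x. deriv U (x + - c) = deriv U x"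
  proof
    fix x show "deriv U (x + - c) = deriv U x" using P[rule_format, of "x + - c"] by simp
  qed
  have "{action U T \<gamma> | T \<gamma>. admissible U T \<gamma> \<and> \<gamma> 0 = x + c \<and> \<gamma> T = y + c}
      = {action U T \<gamma> | T \<gamma>. admissible U T \<gamma> \<and> \<gamma> 0 = x \<and> \<gamma> T = y}"
  proof (intro equalityI subsetI)
    fix v assume "v \<in> {action U T \<gamma> | T \<gamma>. admissible U T \<gamma> \<and> \<gamma> 0 = x + c \<and> \<gamma> T = y + c}"
    then obtain T \<gamma> where h: "v = action U T \<gamma>" "admissible U T \<gamma>" "\<gamma> 0 = x + c" "\<gamma> T = y + c" by blast
    then show "v \<in> {action U T \<gamma> | T \<gamma>. admissible U T \<gamma> \<and> \<gamma> 0 = x \<and> \<gamma> T = y}"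
      using key[OF Pm, of T \<gamma>] by (intro CollectI exI[of _ T] exI[of _ "\<lambda>t. \<gamma> t + - c"]) simp
  next
    fix v assume "v \<in> {action U T \<gamma> | T \<gamma>. admissible U T \<gamma> \<and> \<gamma> 0 = x \<and> \<gamma> T = y}"
    then obtain T \<gamma> where h: "v = action U T \<gamma>" "admissible U T \<gamma>" "\<gamma> 0 = x" "\<gamma> T = y" by blast
    then show "v \<in> {action U T \<gamma> | T \<gamma>. admissible U T \<gamma> \<and> \<gamma> 0 = x + c \<and> \<gamma> T = y + c}"
      using key[OF P, of T \<gamma>] by (intro CollectI exI[of _ T] exI[of _ "\<lambda>t. \<gamma> t + c"]) simp
  qed
  then show ?thesis unfolding barrier_def by simp
qed

lemma bdd_below_act: "bdd_below {action U T \<gamma> | \<gamma>. admissible U T \<gamma> \<and> P \<gamma>}"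
proof (rule bdd_belowI[of _ 0])
  fix v assume "v \<in> {action U T \<gamma> | \<gamma>. admissible U T \<gamma> \<and> P \<gamma>}"
  then obtain \<gamma> where "v = action U T \<gamma>" "admissible U T \<gamma>" by blast
  then show "0 \<le> v" using action_nonneg by simp
qed

lemma peierls_le0:
  assumes DC: "continuous_on UNIV (deriv U)" and crit: "deriv U p = 0"
  shows "peierls U p p \<le> 0"
  unfolding peierls_def
proof (rule Liminf_le)
  show "(at_top :: real filter) \<noteq> bot" by simp
  show "\<forall>\<^sub>F T in at_top. ereal (Inf {action U T \<gamma> | \<gamma>. admissible U T \<gamma> \<and> \<gamma> 0 = p \<and> (\<exists>m::int. \<gamma> T = p + of_int m)}) \<le> 0"
    using eventually_ge_at_top[of 0]
  proof eventually_elim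
    case (elim T)
    note L = linear_adm[OF DC elim, of p 0]
    have A0: "action U T (\<lambda>t. p + t * 0) = 0"
      unfolding L(2) by (simp add: lagr_def crit)
    have Mem: "action U T (\<lambda>t. p + t * 0) \<in> {action U T \<gamma> | \<gamma>. admissible U T \<gamma> \<and> \<gamma> 0 = p \<and> (\<exists>m::int. \<gamma> T = p + of_int m)}"
    proof -
      have M: "\<exists>m::int. p + T * 0 = p + of_int m" by (rule exI[of _ 0]) simp
      show ?thesis by (intro CollectI exI[of _ "\<lambda>t. p + t * 0"] conjI L(1) M refl) simp
    qed
    have Bdd: "bdd_below {action U T \<gamma> | \<gamma>. admissible U T \<gamma> \<and> (\<gamma> 0 = p \<and> (\<exists>m::int. \<gamma> T = p + of_int m))}"
      by (rule bdd_below_act)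
    have "Inf {action U T \<gamma> | \<gamma>. admissible U T \<gamma> \<and> \<gamma> 0 = p \<and> (\<exists>m::int. \<gamma> T = p + of_int m)} \<le> action U T (\<lambda>t. p + t * 0)"
      by (rule cInf_lower[OF Mem Bdd])
    then show ?case using A0 by simp
  qed
qed

lemma peierls_ge:
  assumes DC: "continuous_on UNIV (deriv U)" and H: "\<And>m::int. c \<le> barrier U x (y + of_int m)"
  shows "ereal c \<le> peierls U x y"
  unfolding peierls_def
proof (rule Liminf_bounded)
  show "\<forall>\<^sub>F T in at_top. ereal c \<le> ereal (Inf {action U T \<gamma> | \<gamma>. admissible U T \<gamma> \<and> \<gamma> 0 = x \<and> (\<exists>m::int. \<gamma> T = y + of_int m)})"
    using eventually_gt_at_top[of 0]
  proof eventually_elim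
    case (elim T)
    then have T: "0 \<le> T" "T \<noteq> 0" by auto
    note L = linear_adm[OF DC T(1), of x "(y - x) / T"]
    have "action U T (\<lambda>t. x + t * ((y - x) / T)) \<in> {action U T \<gamma> | \<gamma>. admissible U T \<gamma> \<and> \<gamma> 0 = x \<and> (\<exists>m::int. \<gamma> T = y + of_int m)}"
    proof -
      have M: "\<exists>m::int. x + T * ((y - x) / T) = y + of_int m" by (rule exI[of _ 0]) (use T in simp)
      show ?thesis by (intro CollectI exI[of _ "\<lambda>t. x + t * ((y - x) / T)"] conjI L(1) M refl) simp
    qed
    then have ne: "{action U T \<gamma> | \<gamma>. admissible U T \<gamma> \<and> \<gamma> 0 = x \<and> (\<exists>m::int. \<gamma> T = y + of_int m)} \<noteq> {}"
      by blast
    have "c \<le> Inf {action U T \<gamma> | \<gamma>. admissible U T \<gamma> \<and> \<gamma> 0 = x \<and> (\<exists>m::int. \<gamma> T = y + of_int m)}"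
    proof (rule cInf_greatest[OF ne])
      fix v assume "v \<in> {action U T \<gamma> | \<gamma>. admissible U T \<gamma> \<and> \<gamma> 0 = x \<and> (\<exists>m::int. \<gamma> T = y + of_int m)}"
      then obtain \<gamma> m where "v = action U T \<gamma>" "admissible U T \<gamma>" "\<gamma> 0 = x" "\<gamma> T = y + of_int m" by blast
      then show "c \<le> v" using H[of m] barrier_le[of U T \<gamma> x "y + of_int m"] by simp
    qed
    then show ?case by simp
  qed
qed

lemma comb:
  fixes B :: "int \<Rightarrow> int \<Rightarrow> real" and k :: int
  assumes k: "1 \<le> k"
    and add: "\<And>a b c. a \<le> b \<Longrightarrow> b \<le> c \<Longrightarrow> B a c = B a b + B b c"
    and add': "\<And>a b c. c \<le> b \<Longrightarrow> b \<le> a \<Longrightarrow> B a c = B a b + B b c"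
    and nn: "\<And>a b. 0 \<le> B a b"
    and sh: "\<And>a b t. B (a + t * k) (b + t * k) = B a b"
    and W_def: "\<And>i. W i = Min ((\<lambda>c. (if c < i then B (c+1) i else B (c+1) (i+k))
                      + (if i \<le> c then B c i else B c (i-k))) ` {1..k})"
    and i: "i \<in> {1..k}" and j: "j \<in> {1..k}"
  shows "W i \<le> W j + B j (i + m * k)"
proof -
  define F where "F i d = B d i + B (d+1) (i+k)" for i d
  have B0: "B a a = 0" for a using add[of a a a] by simp
  have sh1: "B (a + k) (b + k) = B a b" for a b using sh[of a 1 b] by simp
  have Teq: "(if c < i then B (c+1) i else B (c+1) (i+k)) + (if i \<le> c then B c i else B c (i-k))
        = F i (if i \<le> c then c else c + k)" for i c
  proof (cases "i \<le> c")
    case True then show ?thesis by (simp add: F_def)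
  next
    case False
    have "B (c+1) i = B (c + k + 1) (i + k)" using sh1[of "c+1" i] by (simp add: algebra_simps)
    moreover have "B c (i - k) = B (c + k) i" using sh1[of c "i - k"] by simp
    ultimately show ?thesis using False by (simp add: F_def algebra_simps)
  qed
  have Fsh: "F (i + t * k) (d + t * k) = F i d" for i d t
    unfolding F_def using sh[of d t i] sh[of "d+1" t "i+k"] by (simp add: algebra_simps)
  have W_le: "W i \<le> F (i + t * k) d" if i: "i \<in> {1..k}" and d: "i + t * k \<le> d" "d \<le> i + t * k + k - 1" for i t d
  proof -
    define d0 where "d0 = d - t * k"
    have d0: "i \<le> d0" "d0 \<le> i + k - 1" using d unfolding d0_def by auto
    have "F (i + t * k) d = F (i + t * k) (d0 + t * k)" unfolding d0_def by simp
    also have "\<dots> = F i d0" by (rule Fsh)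
    finally have e1: "F (i + t * k) d = F i d0" .
    define c where "c = (if d0 \<le> k then d0 else d0 - k)"
    have c: "c \<in> {1..k}" using d0 i unfolding c_def by auto
    have "(if i \<le> c then c else c + k) = d0" using d0 i unfolding c_def by auto
    then have "F i d0 = (\<lambda>c. (if c < i then B (c+1) i else B (c+1) (i+k))
                      + (if i \<le> c then B c i else B c (i-k))) c" using Teq[of c i] by simp
    also have "\<dots> \<ge> W i" unfolding W_def by (rule Min_le) (use c in auto)
    finally show ?thesis using e1 by simp
  qed
  obtain d where d: "j \<le> d" "d \<le> j + k - 1" "W j = F j d"
  proof -
    have "W j \<in> (\<lambda>c. (if c < j then B (c+1) j else B (c+1) (j+k))
                      + (if j \<le> c then B c j else B c (j-k))) ` {1..k}"
      unfolding W_def by (rule Min_in) (use k in auto)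
    then obtain c where c: "c \<in> {1..k}" "W j = (if c < j then B (c+1) j else B (c+1) (j+k))
                      + (if j \<le> c then B c j else B c (j-k))" by blast
    show ?thesis
      by (rule that[of "if j \<le> c then c else c + k"]) (use c j Teq[of c j] in auto)
  qed
  have Wj: "W j = B d j + B (d+1) (j+k)" using d F_def by simp
  define i' where "i' = i + m * k"
  show ?thesis
  proof (cases "j \<le> i'")
    case True
    define t0 where "t0 = - ((i - j) div k)"
    define i0 where "i0 = i + t0 * k"
    have dm: "(i - j) div k * k + (i - j) mod k = i - j" by (rule div_mult_mod_eq)
    have "0 \<le> (i - j) mod k" "(i - j) mod k < k" using k by auto
    moreover have "i0 = i - (i - j) div k * k" unfolding i0_def t0_def by simp
    ultimately have i0: "j \<le> i0" "i0 \<le> j + k - 1" using dm by linarith+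
    have "i0 \<le> i'"
    proof (rule ccontr)
      assume "\<not> i0 \<le> i'"
      then have "m * k < t0 * k" unfolding i0_def i'_def by simp
      then have "m < t0" using k by (simp add: mult_less_cancel_right)
      then have "m * k \<le> (t0 - 1) * k" using k by (intro mult_right_mono) auto
      then have "i' \<le> i0 - k" unfolding i0_def i'_def by (simp add: algebra_simps)
      then show False using i0 True by simp
    qed
    have P: "B j i' \<ge> B j i0" using add[OF i0(1) \<open>i0 \<le> i'\<close>] nn[of i0 i'] by simp
    show ?thesis
    proof (cases "i0 \<le> d")
      case True
      have "W i \<le> F i0 d" unfolding i0_def by (rule W_le[OF i]) (use True d i0 in \<open>auto simp: i0_def\<close>)
      moreover have "B d j = B d i0 + B i0 j" by (rule add') (use True i0 in auto)
      moreover have "B (d+1) (i0+k) = B (d+1) (j+k) + B (j+k) (i0+k)" by (rule add) (use d i0 in auto)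
      moreover have "B (j+k) (i0+k) = B j i0" by (rule sh1)
      ultimately show ?thesis using Wj P nn[of i0 j] unfolding F_def i'_def by linarith
    next
      case False
      have "W i \<le> F i0 i0" unfolding i0_def by (rule W_le[OF i]) (use k in \<open>auto simp: i0_def\<close>)
      moreover have "B (i0+1) (i0+k) = B (i0+1) (j+k) + B (j+k) (i0+k)" by (rule add) (use i0 in auto)
      moreover have "B (d+1) (j+k) = B (d+1) (i0+1) + B (i0+1) (j+k)" by (rule add) (use False i0 in auto)
      moreover have "B (j+k) (i0+k) = B j i0" by (rule sh1)
      ultimately show ?thesis using Wj P nn[of "d+1" "i0+1"] nn[of d j] B0[of i0] unfolding F_def i'_def by linarith
    qed
  next
    case False
    define t0 where "t0 = (j - i) div k"
    define i0 where "i0 = i + t0 * k"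
    have dm: "(j - i) div k * k + (j - i) mod k = j - i" by (rule div_mult_mod_eq)
    have "0 \<le> (j - i) mod k" "(j - i) mod k < k" using k by auto
    moreover have "i0 = i + (j - i) div k * k" unfolding i0_def t0_def by simp
    ultimately have i0: "i0 \<le> j" "j - k + 1 \<le> i0" using dm by linarith+
    have "i' \<le> i0"
    proof (rule ccontr)
      assume "\<not> i' \<le> i0"
      then have "t0 * k < m * k" unfolding i0_def i'_def by simp
      then have "t0 < m" using k by (simp add: mult_less_cancel_right)
      then have "(t0 + 1) * k \<le> m * k" using k by (intro mult_right_mono) auto
      then have "i0 + k \<le> i'" unfolding i0_def i'_def by (simp add: algebra_simps)
      then show False using i0 False by simp
    qed
    have P: "B j i' \<ge> B j i0" using add'[OF \<open>i' \<le> i0\<close> i0(1)] nn[of i0 i'] by simp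
    show ?thesis
    proof (cases "d + 1 \<le> i0 + k")
      case True
      have "W i \<le> F (i0 + k) (d + k)" unfolding i0_def
        using W_le[OF i, of "t0 + 1" "d + k"] True d i0 by (simp add: algebra_simps i0_def)
      moreover have "F (i0 + k) (d + k) = F i0 d" using Fsh[of i0 1 d] by simp
      moreover have "B d i0 = B d j + B j i0" by (rule add') (use d i0 in auto)
      moreover have "B (d+1) (j+k) = B (d+1) (i0+k) + B (i0+k) (j+k)" by (rule add) (use True i0 in auto)
      ultimately show ?thesis using Wj P nn[of "i0+k" "j+k"] unfolding F_def i'_def by linarith
    next
      case False
      have "W i \<le> F i0 (i0 + k - 1)" unfolding i0_def by (rule W_le[OF i]) (use k in \<open>auto simp: i0_def\<close>)
      moreover have "B (i0+k-1) i0 = B (i0+k-1) j + B j i0" by (rule add') (use i0 in auto)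
      moreover have "B d j = B d (i0+k-1) + B (i0+k-1) j" by (rule add') (use False i0 in auto)
      ultimately show ?thesis using Wj P nn[of d "i0+k-1"] nn[of "d+1" "j+k"] B0[of "i0+k"]
        unfolding F_def i'_def by (simp add: algebra_simps)
    qed
  qed
qed

theorem lemma3p3:
  fixes U Ut :: "real \<Rightarrow> real" and b :: real and k :: int
    and xm xM :: "int \<Rightarrow> real"
  assumes smooth: "smooth_real Ut"
    and per: "\<forall>x. Ut (x + 1) = Ut x"
    and skew: "\<forall>x. U x = Ut x - b * x"
    and k: "1 \<le> k"
    and xM0: "xM 0 = 0" and xMk: "xM k = 1"
    and order: "\<forall>i\<in>{1..k}. xM (i - 1) < xm i \<and> xm i < xM i"
    and per_m: "\<forall>i l. xm (i + l * k) = xm i + of_int l"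
    and per_M: "\<forall>i l. xM (i + l * k) = xM i + of_int l"
    and crit: "{x \<in> {0..1}. deriv U x = 0} = xm ` {1..k} \<union> xM ` {0..k}"
    and locmin: "\<forall>i\<in>{1..k}. \<exists>e>0. \<forall>y. \<bar>y - xm i\<bar> < e \<longrightarrow> U (xm i) \<le> U y"
    and locmax: "\<forall>i\<in>{0..k}. \<exists>e>0. \<forall>y. \<bar>y - xM i\<bar> < e \<longrightarrow> U y \<le> U (xM i)"
  shows "\<forall>i\<in>{1..k}. ereal (Wval U xm k i)
           = Min ((\<lambda>j. ereal (Wval U xm k j) + peierls U (xm j) (xm i)) ` {1..k})"
proof -
  have Ueq: "U = (\<lambda>x. Ut x - b * x)" using skew by auto
  have dUt: "Ut differentiable at x" for x
  proof -
    have "((deriv ^^ 0) Ut) differentiable (at x)" using smooth unfolding smooth_real_def by blast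
    then show ?thesis by simp
  qed
  have ddUt: "deriv Ut differentiable at x" for x
  proof -
    have "((deriv ^^ 1) Ut) differentiable (at x)" using smooth unfolding smooth_real_def by blast
    then show ?thesis by simp
  qed
  have dU: "deriv U x = deriv Ut x - b" for x
  proof -
    have "DERIV Ut x :> deriv Ut x" using dUt DERIV_deriv_iff_real_differentiable by blast
    then have "DERIV U x :> deriv Ut x - b" unfolding Ueq by (auto intro!: derivative_eq_intros)
    then show ?thesis by (rule DERIV_imp_deriv)
  qed
  have DC: "continuous_on UNIV (deriv U)"
  proof -
    have "continuous_on UNIV (deriv Ut)"
      using ddUt by (auto intro: differentiable_imp_continuous_on simp: differentiable_on_def)
    then have "continuous_on UNIV (\<lambda>x. deriv Ut x - b)" by (intro continuous_intros)
    moreover have "deriv U = (\<lambda>x. deriv Ut x - b)" using dU by auto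
    ultimately show ?thesis by simp
  qed
  have Utn: "Ut (x + real n) = Ut x" for x n
  proof (induction n)
    case (Suc n)
    have "Ut (x + real (Suc n)) = Ut ((x + real n) + 1)" by (simp add: algebra_simps)
    also have "\<dots> = Ut (x + real n)" using per by blast
    finally show ?case using Suc by simp
  qed simp
  have Uti: "Ut (x + of_int m) = Ut x" for x m
  proof (cases "0 \<le> m")
    case True
    define n where "n = nat m"
    have "m = int n" using True unfolding n_def by simp
    then show ?thesis using Utn[of x n] by simp
  next
    case False
    define n where "n = nat (- m)"
    have n: "m = - int n" using False unfolding n_def by simp
    have "Ut x = Ut ((x - real n) + real n)" by simp
    also have "\<dots> = Ut (x - real n)" by (rule Utn[of "x - real n" n])
    finally show ?thesis using n by simp
  qed
  have DP: "\<forall>x. deriv U (x + of_int m) = deriv U x" for m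
  proof
    fix x
    have "deriv Ut (x + of_int m) = deriv (\<lambda>t. Ut (t + of_int m)) x" by (rule deriv_shift)
    also have "(\<lambda>t. Ut (t + of_int m)) = Ut" using Uti by auto
    finally show "deriv U (x + of_int m) = deriv U x" using dU by simp
  qed
  have step0: "xm r < xm (r + 1)" if r: "r \<in> {1..k}" for r
  proof (cases "r = k")
    case True
    have "xm k < xM k" using order[rule_format, of k] k by simp
    moreover have "xm (1 + 1 * k) = xm 1 + 1" using per_m by (metis of_int_1)
    moreover have "xM (1 - 1) < xm 1" using order[rule_format, of 1] k by simp
    ultimately show ?thesis using True xM0 xMk by (simp add: add.commute)
  next
    case False
    then have "r + 1 \<in> {1..k}" using r by auto
    then have "xM r < xm (r + 1)" using order by (metis add_diff_cancel_right')
    moreover have "xm r < xM r" using order[rule_format, OF r] by simp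
    ultimately show ?thesis by simp
  qed
  have step: "xm i < xm (i + 1)" for i
  proof -
    define l where "l = (i - 1) div k"
    define r where "r = (i - 1) mod k + 1"
    have ir: "i = r + l * k" unfolding r_def l_def by simp
    have "0 \<le> (i - 1) mod k" "(i - 1) mod k < k" using k by simp_all
    then have r: "r \<in> {1..k}" unfolding r_def by simp
    have "xm i = xm r + of_int l" using per_m ir by simp
    moreover have "xm (i + 1) = xm (r + 1) + of_int l"
      using per_m[rule_format, of "r + 1" l] ir by (simp add: algebra_simps)
    ultimately show ?thesis using step0[OF r] by simp
  qed
  have monon: "xm a \<le> xm (a + int n)" for a n
  proof (induction n)
    case (Suc n)
    have "xm (a + int n) < xm (a + int n + 1)" by (rule step)
    moreover have "a + int (Suc n) = a + int n + 1" by simp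
    ultimately show ?case using Suc by (metis order.strict_implies_order order_trans)
  qed simp
  have mono: "xm a \<le> xm c" if "a \<le> c" for a c
  proof -
    define n where "n = nat (c - a)"
    have "c = a + int n" using \<open>a \<le> c\<close> unfolding n_def by simp
    then show ?thesis using monon[of a n] by simp
  qed
  define B where "B a c = barrier U (xm a) (xm c)" for a c
  have addB: "B a c = B a b' + B b' c" if "a \<le> b'" "b' \<le> c" for a b' c
    using barrier_split[OF DC, of "xm a" "xm b'" "xm c"] barrier_concat[OF DC, of "xm a" "xm c" "xm b'"]
      mono[OF that(1)] mono[OF that(2)] unfolding B_def by simp
  have addB': "B a c = B a b' + B b' c" if "c \<le> b'" "b' \<le> a" for a b' c
    using barrier_split[OF DC, of "xm a" "xm b'" "xm c"] barrier_concat[OF DC, of "xm a" "xm c" "xm b'"]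
      mono[OF that(1)] mono[OF that(2)] unfolding B_def by simp
  have nnB: "0 \<le> B a c" for a c unfolding B_def by (rule barrier_nonneg[OF DC])
  have shB: "B (a + t * k) (c + t * k) = B a c" for a c t
    unfolding B_def using per_m barrier_transl[OF DP[of t], of "xm a" "xm c"] by simp
  define W where "W i = Wval U xm k i" for i
  have W_def': "W i = Min ((\<lambda>c. (if c < i then B (c+1) i else B (c+1) (i+k))
                      + (if i \<le> c then B c i else B c (i-k))) ` {1..k})" for i
    unfolding W_def Wval_def tilde_hR_def tilde_hL_def B_def ..
  have main: "W i \<le> W j + B j (i + m * k)" if "i \<in> {1..k}" "j \<in> {1..k}" for i j m
    by (rule comb[OF k addB addB' nnB shB W_def' that])
  show ?thesis
  proof
    fix i assume i: "i \<in> {1..k}"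
    have ge: "ereal (W i) \<le> ereal (W j) + peierls U (xm j) (xm i)" if j: "j \<in> {1..k}" for j
    proof -
      have "ereal (W i - W j) \<le> peierls U (xm j) (xm i)"
      proof (rule peierls_ge[OF DC])
        fix m :: int
        have "W i - W j \<le> B j (i + m * k)" using main[OF i j, of m] by simp
        then show "W i - W j \<le> barrier U (xm j) (xm i + of_int m)"
          unfolding B_def using per_m by simp
      qed
      from add_left_mono[OF this, of "ereal (W j)"]
      have "ereal (W j) + ereal (W i - W j) \<le> ereal (W j) + peierls U (xm j) (xm i)" .
      moreover have "ereal (W j) + ereal (W i - W j) = ereal (W i)" by simp
      ultimately show ?thesis by simp
    qed
    have xi01: "xm i \<in> {0..1}"
    proof -
      have "xM (1 - 1) < xm 1" "xm k < xM k" using order[rule_format, of 1] order[rule_format, of k] k by simp_all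
      moreover have "xm 1 \<le> xm i" "xm i \<le> xm k" using i mono by auto
      ultimately show ?thesis using xM0 xMk by simp
    qed
    have "xm i \<in> {x \<in> {0..1}. deriv U x = 0}" unfolding crit using i by blast
    then have cr: "deriv U (xm i) = 0" by simp
    have le0: "peierls U (xm i) (xm i) \<le> 0" by (rule peierls_le0[OF DC cr])
    have eqi: "ereal (W i) + peierls U (xm i) (xm i) = ereal (W i)"
    proof (rule antisym)
      show "ereal (W i) + peierls U (xm i) (xm i) \<le> ereal (W i)"
        using add_left_mono[OF le0, of "ereal (W i)"] by simp
      show "ereal (W i) \<le> ereal (W i) + peierls U (xm i) (xm i)" by (rule ge[OF i])
    qed
    have "Min ((\<lambda>j. ereal (W j) + peierls U (xm j) (xm i)) ` {1..k}) = ereal (W i)"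
    proof (rule Min_eqI)
      show "finite ((\<lambda>j. ereal (W j) + peierls U (xm j) (xm i)) ` {1..k})" by simp
      show "ereal (W i) \<le> y" if "y \<in> (\<lambda>j. ereal (W j) + peierls U (xm j) (xm i)) ` {1..k}" for y
        using that ge by blast
      show "ereal (W i) \<in> (\<lambda>j. ereal (W j) + peierls U (xm j) (xm i)) ` {1..k}"
        using i eqi by (metis (no_types, lifting) image_eqI)
    qed
    then show "ereal (Wval U xm k i) = Min ((\<lambda>j. ereal (Wval U xm k j) + peierls U (xm j) (xm i)) ` {1..k})"
      unfolding W_def by simp
  qed
qed

end
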